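(* Let $m\ge3$ be odd, let $s$ be an even positive integer not divisible by $4$, $n=sm$, and $\Gamma=C_n[mK_1]$. Define $$\eta_1=(t,t,\dots,t)r,\qquad \eta_2=(\gamma_1,\gamma_2,\dots,\gamma_n)z,\qquad H=\langle\eta_1,\eta_2\rangle,$$ where $\gamma_{2i+1}=\gamma_{2i+2}=tc^{i}$ for $0\le i<n/2$ (so $\eta_2=(t,t,tc,tc,tc^2,tc^2,\dots,tc^{-1},tc^{-1})z$). Then $\eta_1$ has order $n$, $\eta_2$ has order $2m$, $\eta_1\eta_2$ has order $2$, and $|H|=2m^2n$.
   Context: $C_n[mK_1]$ is the graph with vertex set $\{1,\dots,n\}\times\{1,\dots,m\}$ in which $(i_1,j_1)$ is adjacent to $(i_2,j_2)$ if and only if $i_1\equiv i_2\pm1\pmod n$ (residues mod $n$ taken in $\{1,\dots,n\}$). Permutations act on the right ($x\alpha$ is the image of $x$) and products are composed left to right, both in $S_m$ and in $\mathrm{Aut}(\Gamma)$. For $\alpha_1,\dots,\alpha_n\in S_m$ and a permutation $x$ of $\{1,\dots,n\}$ in the dihedral group $D_n=\langle r,z\rangle$, $(\alpha_1,\dots,\alpha_n)x$ denotes the automorphism of $\Gamma$ mapping $(i,j)\mapsto(ix,\,j\alpha_i)$; $1$ denotes an identity permutation. Here $c=(1\,2\,\cdots\,m)\in S_m$; $t\in S_m$ fixes $1$ and maps $j\mapsto m-j+2$ for $2\le j\le m$; $r$ is the permutation $i\mapsto i+1 \pmod n$ of $\{1,\dots,n\}$; and $z$ fixes $1$ and maps $j\mapsto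 n-j+2$ for $2\le j\le n$. *)

theory Defs
  imports "HOL-Algebra.Algebra"
begin

definition verts :: "nat \<Rightarrow> nat \<Rightarrow> (nat \<times> nat) set" where
  "verts n m = {1..n} \<times> {1..m}"

definition cadj :: "nat \<Rightarrow> nat \<times> nat \<Rightarrow> nat \<times> nat \<Rightarrow> bool" where
  "cadj n u v \<longleftrightarrow> fst u mod n = (fst v + 1) mod n \<or> (fst u + 1) mod n = fst v mod n"

text \<open>NOTE: in BijGroup, the product g \<otimes> f is the
  function composition g \<circ> f (apply f first).\<close>
definition AutC :: "nat \<Rightarrow> nat \<Rightarrow> ((nat \<times> nat) \<Rightarrow> (nat \<times> nat)) monoid" where
  "AutC n m = BijGroup (verts n m) \<lparr>carrier :=
     {f \<in> Bij (verts n m). \<forall>u \<in> verts n m. \<forall>v \<in> verts n m. cadj n u v \<longleftrightarrow> cadj n (f u) (f v)}\<rparr>"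

definition cperm :: "nat \<Rightarrow> nat \<Rightarrow> nat" where
  "cperm m j = j mod m + 1"

definition tperm :: "nat \<Rightarrow> nat \<Rightarrow> nat" where
  "tperm m j = (if j = 1 then 1 else m + 2 - j)"

definition rperm :: "nat \<Rightarrow> nat \<Rightarrow> nat" where
  "rperm n i = i mod n + 1"

definition zperm :: "nat \<Rightarrow> nat \<Rightarrow> nat" where
  "zperm n i = (if i = 1 then 1 else n + 2 - i)"

definition eta1 :: "nat \<Rightarrow> nat \<Rightarrow> (nat \<times> nat) \<Rightarrow> (nat \<times> nat)" where
  "eta1 n m = (\<lambda>v \<in> verts n m. (rperm n (fst v), tperm m (snd v)))"

text \<open>eta2 = (gamma_1,...,gamma_n) z with gamma_(2k+1) = gamma_(2k+2) = t c^k
  (left-to-right product: apply t, then c^k), i.e. gamma_i = t c^((i-1) div 2).\<close>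
definition eta2 :: "nat \<Rightarrow> nat \<Rightarrow> (nat \<times> nat) \<Rightarrow> (nat \<times> nat)" where
  "eta2 n m = (\<lambda>v \<in> verts n m.
      (zperm n (fst v), (cperm m ^^ ((fst v - 1) div 2)) (tperm m (snd v))))"

end

theory Submission
  imports Defs
begin

definition sg :: "int \<Rightarrow> int" where "sg k = (if even k then 1 else -1)"

definition Gm :: "nat \<Rightarrow> nat \<Rightarrow> (int \<Rightarrow> int \<Rightarrow> int) \<Rightarrow> (int \<Rightarrow> int \<Rightarrow> int) \<Rightarrow> nat \<times> nat \<Rightarrow> nat \<times> nat" where
  "Gm n m Xf Yf = (\<lambda>v\<in>verts n m. (nat (Xf (int (fst v) - 1) (int (snd v) - 1) mod int n) + 1,
                                nat (Yf (int (fst v) - 1) (int (snd v) - 1) mod int m) + 1))"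

definition FF :: "nat \<Rightarrow> nat \<Rightarrow> bool \<Rightarrow> int \<Rightarrow> int \<Rightarrow> int \<Rightarrow> nat \<times> nat \<Rightarrow> nat \<times> nat" where
  "FF n m e k u al = Gm n m (\<lambda>a b. if e then k - a else a + k)
     (\<lambda>a b. if e then - sg k * b + sg k * (a div 2) + u - al * a else sg k * b + u + al * a)"

lemma G_eq:
  assumes "n > 0" "m > 0"
    "\<And>a b. 0 \<le> a \<Longrightarrow> a < int n \<Longrightarrow> 0 \<le> b \<Longrightarrow> b < int m \<Longrightarrow>
       Xf a b mod int n = Xg a b mod int n \<and> Yf a b mod int m = Yg a b mod int m"
  shows "Gm n m Xf Yf = Gm n m Xg Yg"
proof (rule ext)
  fix v :: "nat \<times> nat"
  show "Gm n m Xf Yf v = Gm n m Xg Yg v"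
  proof (cases "v \<in> verts n m")
    case True
    then have "0 \<le> int (fst v) - 1" "int (fst v) - 1 < int n" "0 \<le> int (snd v) - 1" "int (snd v) - 1 < int m"
      by (auto simp: verts_def)
    from assms(3)[OF this] True show ?thesis by (simp add: Gm_def)
  next
    case False
    then show ?thesis by (simp add: Gm_def)
  qed
qed

lemma G_verts: "n > 0 \<Longrightarrow> m > 0 \<Longrightarrow> v \<in> verts n m \<Longrightarrow> Gm n m Xf Yf v \<in> verts n m"
proof -
  assume a: "n > 0" "m > 0" "v \<in> verts n m"
  have "\<And>z::int. \<And>k::nat. k > 0 \<Longrightarrow> nat (z mod int k) < k"
    by (simp add: nat_less_iff)
  with a show ?thesis unfolding Gm_def verts_def by (auto simp: Suc_le_eq)
qed

lemma G_compose:
  assumes "n > 0" "m > 0"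
  shows "compose (verts n m) (Gm n m Xf Yf) (Gm n m Xg Yg) =
     Gm n m (\<lambda>a b. Xf (Xg a b mod int n) (Yg a b mod int m)) (\<lambda>a b. Yf (Xg a b mod int n) (Yg a b mod int m))"
proof (rule ext)
  fix v :: "nat \<times> nat"
  show "compose (verts n m) (Gm n m Xf Yf) (Gm n m Xg Yg) v = Gm n m (\<lambda>a b. Xf (Xg a b mod int n) (Yg a b mod int m)) (\<lambda>a b. Yf (Xg a b mod int n) (Yg a b mod int m)) v"
  proof (cases "v \<in> verts n m")
    case True
    have "Gm n m Xg Yg v \<in> verts n m" using G_verts[OF assms True] .
    then show ?thesis using True assms
      by (simp add: compose_def Gm_def)
  next
    case False
    then show ?thesis by (simp add: compose_def Gm_def)
  qed
qed

lemma G_inj: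
  assumes "n > 0" "m > 0"
    "\<And>a b a' b'. 0 \<le> a \<Longrightarrow> a < int n \<Longrightarrow> 0 \<le> b \<Longrightarrow> b < int m \<Longrightarrow>
       0 \<le> a' \<Longrightarrow> a' < int n \<Longrightarrow> 0 \<le> b' \<Longrightarrow> b' < int m \<Longrightarrow>
       Xf a b mod int n = Xf a' b' mod int n \<Longrightarrow> Yf a b mod int m = Yf a' b' mod int m \<Longrightarrow> a = a' \<and> b = b'"
  shows "inj_on (Gm n m Xf Yf) (verts n m)"
proof (rule inj_onI)
  fix v w assume v: "v \<in> verts n m" and w: "w \<in> verts n m" and eq: "Gm n m Xf Yf v = Gm n m Xf Yf w"
  from eq v w assms(1,2) have e1: "Xf (int (fst v) - 1) (int (snd v) - 1) mod int n = Xf (int (fst w) - 1) (int (snd w) - 1) mod int n"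
    and e2: "Yf (int (fst v) - 1) (int (snd v) - 1) mod int m = Yf (int (fst w) - 1) (int (snd w) - 1) mod int m"
    by (auto simp: Gm_def eq_nat_nat_iff)
  from v w have r: "0 \<le> int (fst v) - 1" "int (fst v) - 1 < int n" "0 \<le> int (snd v) - 1" "int (snd v) - 1 < int m"
      "0 \<le> int (fst w) - 1" "int (fst w) - 1 < int n" "0 \<le> int (snd w) - 1" "int (snd w) - 1 < int m"
    by (auto simp: verts_def)
  from assms(3)[OF r e1 e2] show "v = w" by (simp add: prod_eq_iff)
qed

lemma G_Bij:
  assumes "n > 0" "m > 0" "inj_on (Gm n m Xf Yf) (verts n m)"
  shows "Gm n m Xf Yf \<in> Bij (verts n m)"
proof -
  have fin: "finite (verts n m)" by (simp add: verts_def)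
  have sub: "Gm n m Xf Yf ` verts n m \<subseteq> verts n m" using G_verts[OF assms(1,2)] by auto
  have "Gm n m Xf Yf ` verts n m = verts n m" using endo_inj_surj[OF fin sub assms(3)] .
  then show ?thesis using assms(3) by (simp add: Bij_def bij_betw_def Gm_def)
qed

lemma modinj:
  fixes a a' c s N :: int
  assumes "0 \<le> a" "a < N" "0 \<le> a'" "a' < N" "(c + s*a) mod N = (c + s*a') mod N" "s = 1 \<or> s = -1"
  shows "a = a'"
proof -
  have "N dvd (c + s*a) - (c + s*a')" using assms(5) by (simp add: mod_eq_dvd_iff)
  then have "N dvd s * (a - a')" by (simp add: algebra_simps)
  then have d: "N dvd (a - a')" using assms(6) by (auto simp: dvd_diff_commute)
  show ?thesis
  proof (rule ccontr)
    assume "a \<noteq> a'"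
    then have "\<bar>N\<bar> \<le> \<bar>a - a'\<bar>" using dvd_imp_le_int d by auto
    then show False using assms(1-4) by auto
  qed
qed

lemma nat_helper: "int x - 1 = t \<Longrightarrow> 0 \<le> t \<Longrightarrow> x = nat t + 1"
  by arith

lemma cpow:
  assumes "m > 0" "1 \<le> j" "j \<le> m"
  shows "(cperm m ^^ k) j = nat ((int j - 1 + int k) mod int m) + 1"
proof (induction k)
  case 0
  then show ?case using assms by simp
next
  case (Suc k)
  define r where "r = (int j - 1 + int k) mod int m"
  have r0: "0 \<le> r" using assms by (simp add: r_def)
  have "int ((nat r + 1) mod m) = (r + 1) mod int m"
    using r0 by (simp add: of_nat_mod add.commute)
  also have "\<dots> = (int j + int k) mod int m"
    by (simp add: r_def mod_simps)
  finally have e: "Suc (nat r) mod m = nat ((int j + int k) mod int m)"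
    by (metis Suc_eq_plus1 nat_int)
  show ?case using Suc by (simp add: cperm_def r_def[symmetric] e)
qed

lemma neg_mod_form:
  fixes j m :: nat
  assumes "1 \<le> j" "j \<le> m"
  shows "(- (int j - 1)) mod int m = (if j = 1 then 0 else int m + 1 - int j)"
proof (cases "j = 1")
  case True then show ?thesis by simp
next
  case False
  have "(- (int j - 1)) mod int m = (1 - int j + int m) mod int m"
    by simp
  also have "\<dots> = 1 - int j + int m" using assms False by (intro mod_pos_pos_trivial) auto
  finally show ?thesis using False by simp
qed

lemma tperm_int: "1 \<le> j \<Longrightarrow> j \<le> m \<Longrightarrow> int (tperm m j) - 1 = (- (int j - 1)) mod int m"
  using neg_mod_form[of j m] by (simp add: tperm_def)

lemma zperm_int: "1 \<le> i \<Longrightarrow> i \<le> n \<Longrightarrow> int (zperm n i) - 1 = (- (int i - 1)) mod int n"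
  using neg_mod_form[of i n] by (simp add: zperm_def)

lemma rperm_int: "int (rperm n i) - 1 = (int i - 1 + 1) mod int n"
  by (simp add: rperm_def of_nat_mod)

lemma eta1_G: "n > 0 \<Longrightarrow> m > 0 \<Longrightarrow> eta1 n m = Gm n m (\<lambda>a b. a + 1) (\<lambda>a b. - b)"
proof (rule ext)
  fix v :: "nat \<times> nat"
  assume nm: "n > 0" "m > 0"
  show "eta1 n m v = Gm n m (\<lambda>a b. a + 1) (\<lambda>a b. - b) v"
  proof (cases "v \<in> verts n m")
    case True
    then obtain i j where v: "v = (i,j)" "1 \<le> i" "i \<le> n" "1 \<le> j" "j \<le> m" by (auto simp: verts_def)
    have a: "rperm n i = nat ((int i - 1 + 1) mod int n) + 1"
      using nm by (intro nat_helper rperm_int) simp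
    have b: "tperm m j = nat ((- (int j - 1)) mod int m) + 1"
      using nm v by (intro nat_helper tperm_int) simp_all
    show ?thesis using True v a b by (simp add: eta1_def Gm_def)
  next
    case False then show ?thesis by (simp add: eta1_def Gm_def)
  qed
qed

lemma eta2_G: "n > 0 \<Longrightarrow> m > 0 \<Longrightarrow> eta2 n m = Gm n m (\<lambda>a b. - a) (\<lambda>a b. - b + a div 2)"
proof (rule ext)
  fix v :: "nat \<times> nat"
  assume nm: "n > 0" "m > 0"
  show "eta2 n m v = Gm n m (\<lambda>a b. - a) (\<lambda>a b. - b + a div 2) v"
  proof (cases "v \<in> verts n m")
    case True
    then obtain i j where v: "v = (i,j)" "1 \<le> i" "i \<le> n" "1 \<le> j" "j \<le> m" by (auto simp: verts_def)
    have a: "zperm n i = nat ((- (int i - 1)) mod int n) + 1"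
      using nm v by (intro nat_helper zperm_int) simp_all
    have t1: "1 \<le> tperm m j" "tperm m j \<le> m" using v by (auto simp: tperm_def)
    have "(cperm m ^^ ((i - 1) div 2)) (tperm m j) = nat ((int (tperm m j) - 1 + int ((i - 1) div 2)) mod int m) + 1"
      using cpow[OF nm(2) t1] .
    also have "int (tperm m j) - 1 + int ((i - 1) div 2) = (- (int j - 1)) mod int m + (int i - 1) div 2"
      using tperm_int[OF v(4,5)] v by (simp add: of_nat_div of_nat_diff)
    finally have b: "(cperm m ^^ ((i - 1) div 2)) (tperm m j) = nat ((- (int j - 1) + (int i - 1) div 2) mod int m) + 1"
      by (simp add: mod_simps)
    show ?thesis using True v a b apply (simp add: eta2_def Gm_def) by (simp add: algebra_simps)
  next
    case False then show ?thesis by (simp add: eta2_def Gm_def)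
  qed
qed

lemma FF_eta1: "eta1 n m = FF n m False 1 0 0" if "n > 0" "m > 0"
  using that by (simp add: eta1_G FF_def sg_def)

lemma FF_eta2: "eta2 n m = FF n m True 0 0 0" if "n > 0" "m > 0"
  using that by (simp add: eta2_G FF_def sg_def)

lemma FF_one: "n > 0 \<Longrightarrow> m > 0 \<Longrightarrow> FF n m False 0 0 0 = (\<lambda>x\<in>verts n m. x)"
proof (rule ext)
  fix v :: "nat \<times> nat"
  assume nm: "n > 0" "m > 0"
  show "FF n m False 0 0 0 v = (\<lambda>x\<in>verts n m. x) v"
  proof (cases "v \<in> verts n m")
    case True
    then obtain i j where v: "v = (i,j)" "1 \<le> i" "i \<le> n" "1 \<le> j" "j \<le> m" by (auto simp: verts_def)
    have "(int i - 1) mod int n = int i - 1" "(int j - 1) mod int m = int j - 1"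
      using v by (auto intro: mod_pos_pos_trivial)
    moreover have "Suc (nat (int i - 1)) = i" "Suc (nat (int j - 1)) = j" using v by arith+
    ultimately show ?thesis using True v by (simp add: FF_def Gm_def sg_def)
  next
    case False then show ?thesis by (simp add: FF_def Gm_def)
  qed
qed

lemma nat_mod_int_iff: "((a::nat) mod n = b mod n) \<longleftrightarrow> (int a - int b) mod int n = 0"
proof -
  have "((a::nat) mod n = b mod n) \<longleftrightarrow> int a mod int n = int b mod int n"
    by (metis of_nat_eq_iff of_nat_mod)
  also have "\<dots> \<longleftrightarrow> (int a - int b) mod int n = 0"
    by (simp add: mod_eq_dvd_iff dvd_eq_mod_eq_0)
  finally show ?thesis .
qed

lemma cadj_int: "cadj n u v \<longleftrightarrow> (int (fst u) - int (fst v) - 1) mod int n = 0 \<or> (int (fst u) - int (fst v) + 1) mod int n = 0"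
  unfolding cadj_def nat_mod_int_iff by (simp add: algebra_simps)

lemma mod_diff_c: "((a::int) mod N - b mod N + c) mod N = (a - b + c) mod N"
  by (metis mod_add_left_eq mod_diff_eq)

lemma carrier_AutC: "carrier (AutC n m) = {f \<in> Bij (verts n m). \<forall>u \<in> verts n m. \<forall>v \<in> verts n m. cadj n u v \<longleftrightarrow> cadj n (f u) (f v)}"
  by (simp add: AutC_def BijGroup_def)

lemma mult_AutC: "x \<in> carrier (AutC n m) \<Longrightarrow> y \<in> carrier (AutC n m) \<Longrightarrow> x \<otimes>\<^bsub>AutC n m\<^esub> y = compose (verts n m) x y"
  by (auto simp: AutC_def BijGroup_def)

lemma one_AutC: "\<one>\<^bsub>AutC n m\<^esub> = (\<lambda>x\<in>verts n m. x)"
  by (simp add: AutC_def BijGroup_def)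

lemma group_AutC: "group (AutC n m)"
proof -
  let ?V = "verts n m"
  let ?C = "{f \<in> Bij ?V. \<forall>u \<in> ?V. \<forall>v \<in> ?V. cadj n u v \<longleftrightarrow> cadj n (f u) (f v)}"
  have "subgroup ?C (BijGroup ?V)"
  proof (rule subgroup.intro)
    show "?C \<subseteq> carrier (BijGroup ?V)" by (auto simp: BijGroup_def)
  next
    fix x y assume x: "x \<in> ?C" and y: "y \<in> ?C"
    have yf: "y \<in> ?V \<rightarrow> ?V" using y Bij_imp_funcset by blast
    have "compose ?V x y \<in> ?C"
      using x y yf compose_Bij[of x ?V y] by (auto simp: compose_def Pi_def)
    then show "x \<otimes>\<^bsub>BijGroup ?V\<^esub> y \<in> ?C" using x y by (simp add: BijGroup_def)
  next
    show "\<one>\<^bsub>BijGroup ?V\<^esub> \<in> ?C" by (simp add: BijGroup_def id_Bij)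
  next
    fix x assume x: "x \<in> ?C"
    then have xb: "x \<in> Bij ?V" by simp
    then have bb: "bij_betw x ?V ?V" by (simp add: Bij_def)
    have "(\<lambda>y\<in>?V. inv_into ?V x y) \<in> ?C"
    proof -
      have "cadj n u v \<longleftrightarrow> cadj n (inv_into ?V x u) (inv_into ?V x v)" if "u \<in> ?V" "v \<in> ?V" for u v
      proof -
        have iu: "inv_into ?V x u \<in> ?V" "inv_into ?V x v \<in> ?V" using Bij_inv_into_mem[OF xb] that by auto
        have xe: "x (inv_into ?V x u) = u" "x (inv_into ?V x v) = v"
          using bb that by (auto simp: bij_betw_inv_into_right)
        have "cadj n (inv_into ?V x u) (inv_into ?V x v) \<longleftrightarrow> cadj n (x (inv_into ?V x u)) (x (inv_into ?V x v))"
          using x iu by blast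
        then show ?thesis using xe by simp
      qed
      then show ?thesis using restrict_inv_into_Bij[OF xb] by simp
    qed
    then show "inv\<^bsub>BijGroup ?V\<^esub> x \<in> ?C" using inv_BijGroup[OF xb] by simp
  qed
  from subgroup.subgroup_is_group[OF this group_BijGroup]
  show ?thesis by (simp add: AutC_def)
qed

lemma eta1_carrier:
  assumes "n > 0" "m > 0"
  shows "eta1 n m \<in> carrier (AutC n m)"
proof -
  have inj: "inj_on (eta1 n m) (verts n m)" unfolding eta1_G[OF assms]
  proof (rule G_inj[OF assms])
    fix a b a' b' :: int
    assume r: "0 \<le> a" "a < int n" "0 \<le> b" "b < int m" "0 \<le> a'" "a' < int n" "0 \<le> b'" "b' < int m"
      and e1: "(a + 1) mod int n = (a' + 1) mod int n" and e2: "(- b) mod int m = (- b') mod int m"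
    have "a = a'" using modinj[of a "int n" a' 1 1] r e1 by (simp add: add.commute)
    moreover have "b = b'" using modinj[of b "int m" b' 0 "-1"] r e2 by simp
    ultimately show "a = a' \<and> b = b'" by simp
  qed
  have bij: "eta1 n m \<in> Bij (verts n m)" using G_Bij[OF assms] inj eta1_G[OF assms] by simp
  have "cadj n u v \<longleftrightarrow> cadj n (eta1 n m u) (eta1 n m v)" if "u \<in> verts n m" "v \<in> verts n m" for u v
  proof -
    have "int (fst (eta1 n m u)) - int (fst (eta1 n m v)) = (int (fst u)) mod int n - (int (fst v)) mod int n"
      using that rperm_int[of n "fst u"] rperm_int[of n "fst v"] by (auto simp: eta1_def)
    then have "\<And>c. (int (fst (eta1 n m u)) - int (fst (eta1 n m v)) + c) mod int n = (int (fst u) - int (fst v) + c) mod int n"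
      by (simp add: mod_diff_c)
    from this[of "-1"] this[of 1] show ?thesis unfolding cadj_int by simp
  qed
  then have all: "\<forall>u \<in> verts n m. \<forall>v \<in> verts n m. cadj n u v \<longleftrightarrow> cadj n (eta1 n m u) (eta1 n m v)" by blast
  show ?thesis unfolding carrier_AutC mem_Collect_eq using bij all by (rule conjI)
qed

lemma eta2_carrier:
  assumes "n > 0" "m > 0"
  shows "eta2 n m \<in> carrier (AutC n m)"
proof -
  have inj: "inj_on (eta2 n m) (verts n m)" unfolding eta2_G[OF assms]
  proof (rule G_inj[OF assms])
    fix a b a' b' :: int
    assume r: "0 \<le> a" "a < int n" "0 \<le> b" "b < int m" "0 \<le> a'" "a' < int n" "0 \<le> b'" "b' < int m"
      and e1: "(- a) mod int n = (- a') mod int n" and e2: "(- b + a div 2) mod int m = (- b' + a' div 2) mod int m"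
    have aa: "a = a'" using modinj[of a "int n" a' 0 "-1"] r e1 by simp
    have eqb: "\<And>x. a div 2 + (-1) * x = - x + a div 2" by simp
    have "(a div 2 + (-1) * b) mod int m = (a div 2 + (-1) * b') mod int m"
      unfolding eqb using e2 aa by simp
    then have "b = b'" using modinj[of b "int m" b' "a div 2" "-1"] r by simp
    then show "a = a' \<and> b = b'" using aa by simp
  qed
  have bij: "eta2 n m \<in> Bij (verts n m)" using G_Bij[OF assms] inj eta2_G[OF assms] by simp
  have "cadj n u v \<longleftrightarrow> cadj n (eta2 n m u) (eta2 n m v)" if "u \<in> verts n m" "v \<in> verts n m" for u v
  proof -
    have fe: "fst (eta2 n m w) = zperm n (fst w)" if "w \<in> verts n m" for w using that by (simp add: eta2_def)
    have ri: "1 \<le> fst u" "fst u \<le> n" "1 \<le> fst v" "fst v \<le> n" using that by (auto simp: verts_def)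
    have "int (fst (eta2 n m u)) - int (fst (eta2 n m v)) = (- (int (fst u) - 1)) mod int n - (- (int (fst v) - 1)) mod int n"
      using zperm_int[OF ri(1,2)] zperm_int[OF ri(3,4)] unfolding fe[OF that(1)] fe[OF that(2)] by linarith
    then have e: "(int (fst (eta2 n m u)) - int (fst (eta2 n m v)) + c) mod int n = (- (int (fst u) - 1) - (- (int (fst v) - 1)) + c) mod int n" for c
      by (simp only: mod_diff_c)
    have eq: "- (int (fst u) - 1) - (- (int (fst v) - 1)) + c = - (int (fst u) - int (fst v) - c)" for c :: int
      by simp
    have e: "(int (fst (eta2 n m u)) - int (fst (eta2 n m v)) + c) mod int n = (- (int (fst u) - int (fst v) - c)) mod int n" for c
      using e[of c] arg_cong[OF eq[of c], of "\<lambda>x. x mod int n"] by (rule trans)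
    have neg: "\<And>x::int. (- x) mod int n = 0 \<longleftrightarrow> x mod int n = 0"
      by (simp only: dvd_eq_mod_eq_0[symmetric] dvd_minus_iff)
    have c1: "(int (fst (eta2 n m u)) - int (fst (eta2 n m v)) - 1) mod int n = 0 \<longleftrightarrow> (int (fst u) - int (fst v) + 1) mod int n = 0"
      using e[of "-1"] neg[of "int (fst u) - int (fst v) + 1"] by simp
    have c2: "(int (fst (eta2 n m u)) - int (fst (eta2 n m v)) + 1) mod int n = 0 \<longleftrightarrow> (int (fst u) - int (fst v) - 1) mod int n = 0"
      using e[of 1] neg[of "int (fst u) - int (fst v) - 1"] by simp
    show ?thesis unfolding cadj_int c1 c2 by (rule disj_commute)
  qed
  then have all: "\<forall>u \<in> verts n m. \<forall>v \<in> verts n m. cadj n u v \<longleftrightarrow> cadj n (eta2 n m u) (eta2 n m v)" by blast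
  show ?thesis unfolding carrier_AutC mem_Collect_eq using bij all by (rule conjI)
qed

lemma decomp: "\<exists>d. x mod (k::int) = x + k * d"
  by (rule exI[of _ "- (x div k)"]) (metis add.commute diff_conv_add_uminus minus_mult_div_eq_mod mult_minus_right)

lemma sg_p1: "sg (k + 1) = - sg k" by (simp add: sg_def)
lemma sg_m1: "sg (k - 1) = - sg k" by (simp add: sg_def)
lemma sg_sq: "sg k * sg k = 1" by (simp add: sg_def)

lemma pd3: "((a::int) + 1) div 2 = a - a div 2" by presburger
lemma pd1: "(2 * (P::int) - 1) - (2*P - 1) div 2 = P" by presburger
lemma pd2: "(2 * (P::int) - a) div 2 = P - a + a div 2" by presburger

locale setup56 =
  fixes n m q :: nat
  assumes nq: "n = 2 * m * q" and m3: "m \<ge> 3" and q0: "q > 0"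
begin

lemma npos: "n > 0" using nq m3 q0 by simp
lemma mpos: "m > 0" using m3 by simp
lemma n6: "n \<ge> 6"
proof -
  have "2 * m * q \<ge> 2 * 3 * 1" using m3 q0 by (intro mult_mono) auto
  then show ?thesis using nq by simp
qed
lemma NQ: "int n = 2 * int m * int q" using nq by simp

lemma div2a:
  assumes "0 \<le> a" "a < int n"
  shows "\<exists>d. ((a + 1) mod int n) div 2 = a - a div 2 + int m * d"
proof (cases "a + 1 < int n")
  case True
  then have "(a + 1) mod int n = a + 1" using assms by (intro mod_pos_pos_trivial) auto
  moreover have "(a + 1) div 2 = a - a div 2" by (rule pd3)
  ultimately show ?thesis by (intro exI[of _ 0]) simp
next
  case False
  define P where "P = int m * int q"
  have a: "a = 2 * P - 1" using False assms NQ by (simp add: P_def)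
  have "a - a div 2 = P" unfolding a by (rule pd1)
  moreover have "(a + 1) mod int n = 0" using a NQ P_def by simp
  ultimately show ?thesis by (intro exI[of _ "- int q"]) (simp add: P_def)
qed

lemma div2b:
  assumes "0 \<le> a" "a < int n"
  shows "\<exists>d. ((- a) mod int n) div 2 = a div 2 - a + int m * d"
proof (cases "a = 0")
  case True
  then show ?thesis by (intro exI[of _ 0]) simp
next
  case False
  define P where "P = int m * int q"
  have "(- a) mod int n = (int n - a) mod int n" by (simp add: mod_simps)
  also have "\<dots> = int n - a" using False assms by (intro mod_pos_pos_trivial) auto
  finally have e: "(- a) mod int n = 2 * P - a" using NQ P_def by simp
  have "(2 * P - a) div 2 = P - a + a div 2" by (rule pd2)
  then show ?thesis unfolding e by (intro exI[of _ "int q"]) (simp add: P_def)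
qed

lemma mulF1: "compose (verts n m) (FF n m False k u al) (eta1 n m) = FF n m False (k + 1) (u + al) al"
  unfolding FF_def eta1_G[OF npos mpos] G_compose[OF npos mpos]
  apply (rule G_eq[OF npos mpos])
  apply (simp only: if_False if_True)
  subgoal for a b
  proof -
    obtain d1 where d1: "(- b) mod int m = - b + int m * d1" using decomp by blast
    obtain d2 where d2: "(a + 1) mod int n = a + 1 + int n * d2" using decomp by blast
    have X: "((a + 1) mod int n + k) mod int n = (a + (k + 1)) mod int n"
      by (simp add: mod_simps ac_simps)
    have Y: "(sg k * ((- b) mod int m) + u + al * ((a + 1) mod int n)) mod int m =
       (sg (k + 1) * b + (u + al) + al * a) mod int m"
      unfolding d1 d2 unfolding NQ sg_p1 mod_eq_dvd_iff dvd_def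
      by (rule exI[of _ "sg k * d1 + 2 * int q * d2 * al"]) (simp add: algebra_simps)
    show ?thesis using X Y by simp
  qed
  done

lemma mulT1: "compose (verts n m) (FF n m True k u al) (eta1 n m) = FF n m True (k - 1) (u - al) (al - sg k)"
  unfolding FF_def eta1_G[OF npos mpos] G_compose[OF npos mpos]
  apply (rule G_eq[OF npos mpos])
  apply (simp only: if_False if_True)
  subgoal for a b
  proof -
    assume r: "0 \<le> a" "a < int n"
    obtain d1 where d1: "(- b) mod int m = - b + int m * d1" using decomp by blast
    obtain d3 where d3: "((a + 1) mod int n) div 2 = a - a div 2 + int m * d3" using div2a[OF r] by blast
    obtain d2 where d2: "(a + 1) mod int n = a + 1 + int n * d2" using decomp by blast
    have X: "(k - (a + 1) mod int n) mod int n = (k - 1 - a) mod int n"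
      unfolding d2 mod_eq_dvd_iff dvd_def by (rule exI[of _ "- d2"]) (simp add: algebra_simps)
    have Y: "(- sg k * ((- b) mod int m) + sg k * (((a + 1) mod int n) div 2) + u - al * ((a + 1) mod int n)) mod int m =
       (- sg (k - 1) * b + sg (k - 1) * (a div 2) + (u - al) - (al - sg k) * a) mod int m"
      unfolding d1 d3 unfolding d2 unfolding NQ sg_m1 mod_eq_dvd_iff dvd_def
      by (rule exI[of _ "sg k * d3 - sg k * d1 - 2 * int q * d2 * al"]) (simp add: algebra_simps)
    show ?thesis using X Y by simp
  qed
  done

lemma mulF2: "compose (verts n m) (FF n m False k u al) (eta2 n m) = FF n m True k u al"
  unfolding FF_def eta2_G[OF npos mpos] G_compose[OF npos mpos]
  apply (rule G_eq[OF npos mpos])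
  apply (simp only: if_False if_True)
  subgoal for a b
  proof -
    obtain d5 where d5: "(- b + a div 2) mod int m = - b + a div 2 + int m * d5" using decomp by blast
    obtain d4 where d4: "(- a) mod int n = - a + int n * d4" using decomp by blast
    have X: "((- a) mod int n + k) mod int n = (k - a) mod int n"
      by (simp add: mod_simps)
    have Y: "(sg k * ((- b + a div 2) mod int m) + u + al * ((- a) mod int n)) mod int m =
       (- sg k * b + sg k * (a div 2) + u - al * a) mod int m"
      unfolding d5 d4 unfolding NQ mod_eq_dvd_iff dvd_def
      by (rule exI[of _ "sg k * d5 + 2 * int q * d4 * al"]) (simp add: algebra_simps)
    show ?thesis using X Y by simp
  qed
  done

lemma mulT2: "compose (verts n m) (FF n m True k u al) (eta2 n m) = FF n m False k u (al - sg k)"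
  unfolding FF_def eta2_G[OF npos mpos] G_compose[OF npos mpos]
  apply (rule G_eq[OF npos mpos])
  apply (simp only: if_False if_True)
  subgoal for a b
  proof -
    assume r: "0 \<le> a" "a < int n"
    obtain d5 where d5: "(- b + a div 2) mod int m = - b + a div 2 + int m * d5" using decomp by blast
    obtain d6 where d6: "((- a) mod int n) div 2 = a div 2 - a + int m * d6" using div2b[OF r] by blast
    obtain d4 where d4: "(- a) mod int n = - a + int n * d4" using decomp by blast
    have X: "(k - (- a) mod int n) mod int n = (a + k) mod int n"
      by (simp add: mod_simps add.commute)
    have Y: "(- sg k * ((- b + a div 2) mod int m) + sg k * (((- a) mod int n) div 2) + u - al * ((- a) mod int n)) mod int m =
       (sg k * b + u + (al - sg k) * a) mod int m"
      unfolding d5 d6 unfolding d4 unfolding NQ mod_eq_dvd_iff dvd_def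
      by (rule exI[of _ "sg k * d6 - sg k * d5 - 2 * int q * d4 * al"]) (simp add: algebra_simps)
    show ?thesis using X Y by simp
  qed
  done

end

lemma sg_0[simp]: "sg 0 = 1" and sg_1[simp]: "sg 1 = -1" and sg_2[simp]: "sg 2 = 1" and sg_n1[simp]: "sg (-1) = -1"
  by (simp_all add: sg_def)

lemma modlin1: "(x + u mod M + (al mod M) * a) mod M = (x + u + al * a) mod (M::int)"
proof -
  obtain d1 where d1: "u mod M = u + M * d1" using decomp by blast
  obtain d2 where d2: "al mod M = al + M * d2" using decomp by blast
  show ?thesis unfolding d1 d2 mod_eq_dvd_iff dvd_def by (rule exI[of _ "d1 + d2 * a"]) (simp add: algebra_simps)
qed

lemma modlin2: "(x + u mod M - (al mod M) * a) mod M = (x + u - al * a) mod (M::int)"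
proof -
  obtain d1 where d1: "u mod M = u + M * d1" using decomp by blast
  obtain d2 where d2: "al mod M = al + M * d2" using decomp by blast
  show ?thesis unfolding d1 d2 mod_eq_dvd_iff dvd_def by (rule exI[of _ "d1 - d2 * a"]) (simp add: algebra_simps)
qed

context setup56
begin

abbreviation "Au \<equiv> AutC n m"
abbreviation "e1 \<equiv> eta1 n m"
abbreviation "e2 \<equiv> eta2 n m"
abbreviation "H \<equiv> generate Au {e1, e2}"

lemma grp: "group Au" by (rule group_AutC)
lemma e1c: "e1 \<in> carrier Au" using eta1_carrier npos mpos by simp
lemma e2c: "e2 \<in> carrier Au" using eta2_carrier npos mpos by simp

lemma m_F1: "FF n m False k u al \<in> carrier Au \<Longrightarrow> FF n m False k u al \<otimes>\<^bsub>Au\<^esub> e1 = FF n m False (k + 1) (u + al) al"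
  by (simp add: mult_AutC e1c mulF1)
lemma m_T1: "FF n m True k u al \<in> carrier Au \<Longrightarrow> FF n m True k u al \<otimes>\<^bsub>Au\<^esub> e1 = FF n m True (k - 1) (u - al) (al - sg k)"
  by (simp add: mult_AutC e1c mulT1)
lemma m_F2: "FF n m False k u al \<in> carrier Au \<Longrightarrow> FF n m False k u al \<otimes>\<^bsub>Au\<^esub> e2 = FF n m True k u al"
  by (simp add: mult_AutC e2c mulF2)
lemma m_T2: "FF n m True k u al \<in> carrier Au \<Longrightarrow> FF n m True k u al \<otimes>\<^bsub>Au\<^esub> e2 = FF n m False k u (al - sg k)"
  by (simp add: mult_AutC e2c mulT2)

lemma one_FF: "\<one>\<^bsub>Au\<^esub> = FF n m False 0 0 0"
  by (simp add: one_AutC FF_one npos mpos)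

lemma sg_modN: "sg (k mod int n) = sg k"
proof -
  obtain d where d: "k mod int n = k + int n * d" using decomp by blast
  have "even (k + 2 * int m * int q * d) = even k" by simp
  then show ?thesis unfolding sg_def d unfolding NQ by simp
qed

lemma FF_norm: "FF n m e k u al = FF n m e (k mod int n) (u mod int m) (al mod int m)"
  unfolding FF_def sg_modN
  apply (rule G_eq[OF npos mpos])
  apply (cases e)
   apply (simp_all add: mod_simps modlin1 modlin2)
  done

lemma FF_eval1: "FF n m e k u al (Suc 0, Suc 0) = (nat (k mod int n) + 1, nat (u mod int m) + 1)"
  using npos mpos by (simp add: FF_def Gm_def verts_def)

lemma FF_eval2: "FF n m e k u al (2, Suc 0) = (nat ((if e then k - 1 else k + 1) mod int n) + 1, nat ((if e then u - al else u + al) mod int m) + 1)"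
  using n6 mpos by (simp add: FF_def Gm_def verts_def add.commute)

lemma FF_eq_iff: "FF n m e k u al = FF n m e' k' u' al' \<longleftrightarrow>
   e = e' \<and> k mod int n = k' mod int n \<and> u mod int m = u' mod int m \<and> al mod int m = al' mod int m"
proof
  assume eq: "FF n m e k u al = FF n m e' k' u' al'"
  from arg_cong[OF eq, of "\<lambda>f. f (Suc 0, Suc 0)"] have "nat (k mod int n) = nat (k' mod int n)" "nat (u mod int m) = nat (u' mod int m)"
    by (simp_all add: FF_eval1)
  then have kk: "k mod int n = k' mod int n" and uu: "u mod int m = u' mod int m"
    using npos mpos by (simp_all add: eq_nat_nat_iff)
  from arg_cong[OF eq, of "\<lambda>f. f (2, Suc 0)"] have
    e2a: "(if e then k - 1 else k + 1) mod int n = (if e' then k' - 1 else k' + 1) mod int n" and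
    e2b: "(if e then u - al else u + al) mod int m = (if e' then u' - al' else u' + al') mod int m"
    using npos mpos by (simp_all add: FF_eval2 eq_nat_nat_iff)
  have kd: "int n dvd k - k'" using kk by (simp add: mod_eq_dvd_iff)
  have ud: "int m dvd u - u'" using uu by (simp add: mod_eq_dvd_iff)
  have ee: "e = e'"
  proof (rule ccontr)
    assume ne: "e \<noteq> e'"
    have "int n dvd 2"
    proof (cases e)
      case True
      with ne e2a have "int n dvd (k - 1) - (k' + 1)" by (simp add: mod_eq_dvd_iff)
      from dvd_diff[OF kd this] show ?thesis by simp
    next
      case False
      with ne e2a have "int n dvd (k + 1) - (k' - 1)" by (simp add: mod_eq_dvd_iff)
      from dvd_diff[OF this kd] show ?thesis by simp
    qed
    then have "int n \<le> 2" by (rule zdvd_imp_le) simp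
    then show False using n6 by simp
  qed
  have "int m dvd al - al'"
  proof (cases e)
    case True
    with ee e2b have "int m dvd (u - al) - (u' - al')" by (simp add: mod_eq_dvd_iff)
    from dvd_diff[OF ud this] show ?thesis by simp
  next
    case False
    with ee e2b have "int m dvd (u + al) - (u' + al')" by (simp add: mod_eq_dvd_iff)
    from dvd_diff[OF this ud] show ?thesis by simp
  qed
  then have "al mod int m = al' mod int m" by (simp add: mod_eq_dvd_iff)
  with ee kk uu show "e = e' \<and> k mod int n = k' mod int n \<and> u mod int m = u' mod int m \<and> al mod int m = al' mod int m"
    by simp
next
  assume h: "e = e' \<and> k mod int n = k' mod int n \<and> u mod int m = u' mod int m \<and> al mod int m = al' mod int m"
  have "FF n m e k u al = FF n m e (k mod int n) (u mod int m) (al mod int m)" by (rule FF_norm)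
  also have "\<dots> = FF n m e' (k' mod int n) (u' mod int m) (al' mod int m)" using h by simp
  also have "\<dots> = FF n m e' k' u' al'" by (rule FF_norm[symmetric])
  finally show "FF n m e k u al = FF n m e' k' u' al'" .
qed

end

context setup56
begin

lemma mon: "monoid Au" using group.is_monoid[OF grp] .

lemma one_c: "FF n m False 0 0 0 \<in> carrier Au"
  using monoid.one_closed[OF mon] one_FF by simp

lemma e1_FF: "e1 = FF n m False 1 0 0" using FF_eta1 npos mpos by simp
lemma e2_FF: "e2 = FF n m True 0 0 0" using FF_eta2 npos mpos by simp

lemma pw1: "FF n m False k u al \<in> carrier Au \<Longrightarrow>
    FF n m False k u al \<otimes>\<^bsub>Au\<^esub> e1 [^]\<^bsub>Au\<^esub> j = FF n m False (k + int j) (u + int j * al) al"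
proof (induction j)
  case 0
  then show ?case using monoid.r_one[OF mon] by simp
next
  case (Suc j)
  have c: "e1 [^]\<^bsub>Au\<^esub> j \<in> carrier Au" using monoid.nat_pow_closed[OF mon e1c] .
  have "FF n m False k u al \<otimes>\<^bsub>Au\<^esub> e1 [^]\<^bsub>Au\<^esub> Suc j =
     (FF n m False k u al \<otimes>\<^bsub>Au\<^esub> e1 [^]\<^bsub>Au\<^esub> j) \<otimes>\<^bsub>Au\<^esub> e1"
    using monoid.m_assoc[OF mon Suc.prems c e1c] by simp
  also have "\<dots> = FF n m False (k + int j) (u + int j * al) al \<otimes>\<^bsub>Au\<^esub> e1" using Suc by simp
  also have "\<dots> = FF n m False (k + int j + 1) (u + int j * al + al) al"
  proof (rule m_F1)
    show "FF n m False (k + int j) (u + int j * al) al \<in> carrier Au"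
      using Suc monoid.m_closed[OF mon Suc.prems c] by simp
  qed
  finally show ?case by (simp add: algebra_simps)
qed

lemma pw2: "FF n m False k u al \<in> carrier Au \<Longrightarrow>
    FF n m False k u al \<otimes>\<^bsub>Au\<^esub> e2 [^]\<^bsub>Au\<^esub> (2 * j) = FF n m False k u (al - int j * sg k)"
proof (induction j)
  case 0
  then show ?case using monoid.r_one[OF mon] by simp
next
  case (Suc j)
  have c: "e2 [^]\<^bsub>Au\<^esub> (2 * j) \<in> carrier Au" using monoid.nat_pow_closed[OF mon e2c] .
  have c2: "e2 [^]\<^bsub>Au\<^esub> (2 * j) \<otimes>\<^bsub>Au\<^esub> e2 \<in> carrier Au" using monoid.m_closed[OF mon c e2c] .
  have p: "e2 [^]\<^bsub>Au\<^esub> (2 * Suc j) = (e2 [^]\<^bsub>Au\<^esub> (2 * j) \<otimes>\<^bsub>Au\<^esub> e2) \<otimes>\<^bsub>Au\<^esub> e2"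
    by (simp add: monoid.nat_pow_Suc)
  have "FF n m False k u al \<otimes>\<^bsub>Au\<^esub> e2 [^]\<^bsub>Au\<^esub> (2 * Suc j) =
     ((FF n m False k u al \<otimes>\<^bsub>Au\<^esub> e2 [^]\<^bsub>Au\<^esub> (2 * j)) \<otimes>\<^bsub>Au\<^esub> e2) \<otimes>\<^bsub>Au\<^esub> e2"
    unfolding p using monoid.m_assoc[OF mon Suc.prems c2 e2c] monoid.m_assoc[OF mon Suc.prems c e2c] by simp
  also have "\<dots> = (FF n m False k u (al - int j * sg k) \<otimes>\<^bsub>Au\<^esub> e2) \<otimes>\<^bsub>Au\<^esub> e2" using Suc by simp
  also have "\<dots> = FF n m True k u (al - int j * sg k) \<otimes>\<^bsub>Au\<^esub> e2"
  proof -
    have "FF n m False k u (al - int j * sg k) \<in> carrier Au"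
      using Suc monoid.m_closed[OF mon Suc.prems c] by simp
    then show ?thesis using m_F2 by simp
  qed
  also have "\<dots> = FF n m False k u (al - int j * sg k - sg k)"
  proof (rule m_T2)
    have "FF n m False k u (al - int j * sg k) \<in> carrier Au"
      using Suc monoid.m_closed[OF mon Suc.prems c] by simp
    then show "FF n m True k u (al - int j * sg k) \<in> carrier Au"
      using m_F2 monoid.m_closed[OF mon _ e2c] by metis
  qed
  finally show ?case by (simp add: algebra_simps)
qed

lemma e1_pow: "e1 [^]\<^bsub>Au\<^esub> j = FF n m False (int j) 0 0"
proof -
  have "e1 [^]\<^bsub>Au\<^esub> j = \<one>\<^bsub>Au\<^esub> \<otimes>\<^bsub>Au\<^esub> e1 [^]\<^bsub>Au\<^esub> j"
    using monoid.l_one[OF mon monoid.nat_pow_closed[OF mon e1c]] by simp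
  also have "\<dots> = FF n m False (int j) 0 0" unfolding one_FF using pw1[OF one_c] by simp
  finally show ?thesis .
qed

lemma e2_pow_even: "e2 [^]\<^bsub>Au\<^esub> (2 * j) = FF n m False 0 0 (- int j)"
proof -
  have "e2 [^]\<^bsub>Au\<^esub> (2 * j) = \<one>\<^bsub>Au\<^esub> \<otimes>\<^bsub>Au\<^esub> e2 [^]\<^bsub>Au\<^esub> (2 * j)"
    using monoid.l_one[OF mon monoid.nat_pow_closed[OF mon e2c]] by simp
  also have "\<dots> = FF n m False 0 0 (- int j)" unfolding one_FF using pw2[OF one_c] by simp
  finally show ?thesis .
qed

lemma e2_pow_odd: "e2 [^]\<^bsub>Au\<^esub> (2 * j + 1) = FF n m True 0 0 (- int j)"
proof -
  have "e2 [^]\<^bsub>Au\<^esub> (2 * j + 1) = e2 [^]\<^bsub>Au\<^esub> (2 * j) \<otimes>\<^bsub>Au\<^esub> e2" by simp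
  also have "\<dots> = FF n m True 0 0 (- int j)" unfolding e2_pow_even
    using m_F2 e2_pow_even monoid.nat_pow_closed[OF mon e2c] by metis
  finally show ?thesis .
qed

lemma ord_e1: "group.ord Au e1 = n"
proof -
  have "e1 [^]\<^bsub>Au\<^esub> j = \<one>\<^bsub>Au\<^esub> \<longleftrightarrow> n dvd j" for j
  proof -
    have "e1 [^]\<^bsub>Au\<^esub> j = \<one>\<^bsub>Au\<^esub> \<longleftrightarrow> int j mod int n = 0"
      unfolding e1_pow one_FF FF_eq_iff by simp
    also have "\<dots> \<longleftrightarrow> n dvd j"
      by (metis dvd_eq_mod_eq_0 of_nat_dvd_iff)
    finally show ?thesis .
  qed
  then show ?thesis using group.ord_unique[OF grp e1c] by blast
qed

lemma ord_e2: "group.ord Au e2 = 2 * m"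
proof -
  have "e2 [^]\<^bsub>Au\<^esub> j = \<one>\<^bsub>Au\<^esub> \<longleftrightarrow> 2 * m dvd j" for j
  proof (cases "even j")
    case True
    then obtain i where i: "j = 2 * i" by blast
    have "e2 [^]\<^bsub>Au\<^esub> j = \<one>\<^bsub>Au\<^esub> \<longleftrightarrow> (- int i) mod int m = 0"
      unfolding i e2_pow_even one_FF FF_eq_iff by simp
    also have "\<dots> \<longleftrightarrow> m dvd i"
      by (metis dvd_eq_mod_eq_0 dvd_minus_iff of_nat_dvd_iff)
    also have "\<dots> \<longleftrightarrow> 2 * m dvd j" unfolding i by simp
    finally show ?thesis .
  next
    case False
    then obtain i where i: "j = 2 * i + 1" using oddE by blast
    have "e2 [^]\<^bsub>Au\<^esub> j \<noteq> \<one>\<^bsub>Au\<^esub>"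
      unfolding i e2_pow_odd one_FF FF_eq_iff by simp
    moreover have "\<not> 2 * m dvd j" using False by (metis dvd_mult_left)
    ultimately show ?thesis by simp
  qed
  then show ?thesis using group.ord_unique[OF grp e2c] by blast
qed

lemma ord_e21: "group.ord Au (e2 \<otimes>\<^bsub>Au\<^esub> e1) = 2"
proof -
  let ?x = "e2 \<otimes>\<^bsub>Au\<^esub> e1"
  have xc: "?x \<in> carrier Au" using monoid.m_closed[OF mon e2c e1c] .
  have x: "?x = FF n m True (-1) 0 (-1)"
    using m_T1[of 0 0 0] e2c unfolding e2_FF by simp
  have "?x \<otimes>\<^bsub>Au\<^esub> e2 = FF n m False (-1) 0 0"
    using m_T2[of "-1" 0 "-1"] xc unfolding x by simp
  then have "(?x \<otimes>\<^bsub>Au\<^esub> e2) \<otimes>\<^bsub>Au\<^esub> e1 = FF n m False 0 0 0"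
    using m_F1[of "-1" 0 0] monoid.m_closed[OF mon xc e2c] by simp
  then have "?x \<otimes>\<^bsub>Au\<^esub> ?x = \<one>\<^bsub>Au\<^esub>"
    using monoid.m_assoc[OF mon xc e2c e1c] one_FF by simp
  then have p2: "?x [^]\<^bsub>Au\<^esub> (2::nat) = \<one>\<^bsub>Au\<^esub>"
    using monoid.l_one[OF mon xc] by (simp add: numeral_2_eq_2)
  have "?x \<noteq> \<one>\<^bsub>Au\<^esub>" unfolding x one_FF FF_eq_iff by simp
  then have o1: "group.ord Au ?x \<noteq> 1" using group.ord_eq_1[OF grp xc] by simp
  have d: "group.ord Au ?x dvd 2" using p2 group.pow_eq_id[OF grp xc] by simp
  have le: "group.ord Au ?x \<le> 2" using d by (rule dvd_imp_le) simp
  have nz: "group.ord Au ?x \<noteq> 0" using d by (intro notI) simp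
  show ?thesis using o1 le nz by linarith
qed

end

lemma alg1:
  assumes "s * s = 1"
  shows "(0 - ((- (al * s)) mod (M::int)) * s) mod M = al mod M"
proof -
  obtain d where d: "(- (al * s)) mod M = - (al * s) + M * d" using decomp by blast
  have "0 - (- (al * s) + M * d) * s - al = al * (s * s) - al - M * (d * s)" by (simp add: algebra_simps)
  also have "\<dots> = M * (- (d * s))" using assms by simp
  finally have "0 - (- (al * s) + M * d) * s - al = M * (- (d * s))" .
  then show ?thesis unfolding d mod_eq_dvd_iff dvd_def by blast
qed

context setup56
begin

abbreviation "PP \<equiv> ({False, True} \<times> {0..<int n} \<times> {0..<int m} \<times> {0..<int m})"
abbreviation "SS \<equiv> (\<lambda>(e, k, u, al). FF n m e k u al) ` PP"

lemma FF_in_SS: "FF n m e k u al \<in> SS"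
proof (rule image_eqI[where x = "(e, k mod int n, u mod int m, al mod int m)"])
  show "FF n m e k u al = (\<lambda>(e, k, u, al). FF n m e k u al) (e, k mod int n, u mod int m, al mod int m)"
    by (simp only: prod.case) (rule FF_norm)
  show "(e, k mod int n, u mod int m, al mod int m) \<in> PP" using npos mpos by (cases e) auto
qed

lemma gens: "{e1, e2} \<subseteq> carrier Au" using e1c e2c by simp
lemma Hc: "h \<in> H \<Longrightarrow> h \<in> carrier Au" using group.generate_in_carrier[OF grp gens] .
lemma H_e: "x \<in> H \<Longrightarrow> y \<in> {e1, e2} \<Longrightarrow> x \<otimes>\<^bsub>Au\<^esub> y \<in> H"
  by (rule generate.eng) (auto intro: generate.incl)

lemma clos1: "FF n m False k u al \<in> H \<Longrightarrow> FF n m False (k + 1) (u + al) al \<in> H"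
proof -
  assume h: "FF n m False k u al \<in> H"
  have "FF n m False k u al \<otimes>\<^bsub>Au\<^esub> e1 \<in> H" by (rule H_e[OF h]) simp
  then show ?thesis unfolding m_F1[OF Hc[OF h]] .
qed
lemma clos2F: "FF n m False k u al \<in> H \<Longrightarrow> FF n m True k u al \<in> H"
proof -
  assume h: "FF n m False k u al \<in> H"
  have "FF n m False k u al \<otimes>\<^bsub>Au\<^esub> e2 \<in> H" by (rule H_e[OF h]) simp
  then show ?thesis unfolding m_F2[OF Hc[OF h]] .
qed
lemma clos2T: "FF n m True k u al \<in> H \<Longrightarrow> FF n m False k u (al - sg k) \<in> H"
proof -
  assume h: "FF n m True k u al \<in> H"
  have "FF n m True k u al \<otimes>\<^bsub>Au\<^esub> e2 \<in> H" by (rule H_e[OF h]) simp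
  then show ?thesis unfolding m_T2[OF Hc[OF h]] .
qed

lemma clos1p: "FF n m False k u al \<in> H \<Longrightarrow> FF n m False (k + int j) (u + int j * al) al \<in> H"
proof (induction j)
  case 0 then show ?case by simp
next
  case (Suc j)
  have "FF n m False (k + int j + 1) (u + int j * al + al) al \<in> H" by (rule clos1[OF Suc.IH[OF Suc.prems]])
  moreover have "k + int j + 1 = k + int (Suc j)" "u + int j * al + al = u + int (Suc j) * al"
    by (simp_all add: algebra_simps)
  ultimately show ?case by simp
qed

lemma clos2p: "FF n m False k u al \<in> H \<Longrightarrow> FF n m False k u (al - int j * sg k) \<in> H"
proof (induction j)
  case 0 then show ?case by simp
next
  case (Suc j)
  have "FF n m False k u (al - int j * sg k - sg k) \<in> H" by (rule clos2T[OF clos2F[OF Suc.IH[OF Suc.prems]]])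
  moreover have "al - int j * sg k - sg k = al - int (Suc j) * sg k"
    by (simp add: algebra_simps)
  ultimately show ?case by simp
qed

lemma step1: "FF n m False 0 (int u) 0 \<in> H"
proof (induction u)
  case 0
  show ?case using generate.one[of Au "{e1, e2}"] one_FF by simp
next
  case (Suc u)
  have a1: "FF n m False 1 (int u) 0 \<in> H" using clos1[OF Suc.IH] by simp
  have a3: "FF n m False 1 (int u) 1 \<in> H" using clos2T[OF clos2F[OF a1]] by simp
  have a4: "FF n m False 2 (int u + 1) 1 \<in> H" using clos1[OF a3] by simp
  have a6: "FF n m False 2 (int u + 1) 0 \<in> H" using clos2T[OF clos2F[OF a4]] by simp
  have a7: "FF n m False (2 + int (n - 2)) (int u + 1 + int (n - 2) * 0) 0 \<in> H" by (rule clos1p[OF a6])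
  have "2 + int (n - 2) = int n" using n6 by simp
  then have a8: "FF n m False (int n) (int u + 1) 0 \<in> H" using a7 by simp
  have "FF n m False (int n) (int u + 1) 0 = FF n m False 0 (int (Suc u)) 0"
    unfolding FF_eq_iff by (simp add: add.commute)
  then show ?case using a8 by simp
qed

lemma all_H: "FF n m e k u al \<in> H"
proof -
  define k0 where "k0 = k mod int n"
  define u0 where "u0 = u mod int m"
  have k0: "0 \<le> k0" using npos by (simp add: k0_def)
  have u0: "0 \<le> u0" using mpos by (simp add: u0_def)
  have "FF n m False 0 (int (nat u0)) 0 \<in> H" by (rule step1)
  then have "FF n m False (0 + int (nat k0)) (int (nat u0) + int (nat k0) * 0) 0 \<in> H" by (rule clos1p)
  then have b: "FF n m False k0 u0 0 \<in> H" using k0 u0 by simp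
  define j where "j = nat ((- (al * sg k0)) mod int m)"
  have b2: "FF n m False k0 u0 (0 - int j * sg k0) \<in> H" by (rule clos2p[OF b])
  have "int j = (- (al * sg k0)) mod int m" using mpos by (simp add: j_def)
  then have "(0 - int j * sg k0) mod int m = al mod int m" using alg1[OF sg_sq[of k0]] by simp
  then have "FF n m False k0 u0 (0 - int j * sg k0) = FF n m False k u al"
    unfolding FF_eq_iff k0_def u0_def by simp
  then have bF: "FF n m False k u al \<in> H" using b2 by simp
  show ?thesis
  proof (cases e)
    case True then show ?thesis using clos2F[OF bF] by simp
  next
    case False then show ?thesis using bF by simp
  qed
qed

lemma SS_H: "SS \<subseteq> H"
proof (rule subsetI)
  fix x assume "x \<in> SS"
  then obtain e k u al where "x = FF n m e k u al" by auto
  then show "x \<in> H" using all_H by simp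
qed

lemma SS_c: "x \<in> SS \<Longrightarrow> x \<in> carrier Au" by (rule Hc[OF subsetD[OF SS_H]])

lemma SS_mul: "x \<in> SS \<Longrightarrow> y \<in> {e1, e2} \<Longrightarrow> x \<otimes>\<^bsub>Au\<^esub> y \<in> SS"
proof -
  assume x: "x \<in> SS" and y: "y \<in> {e1, e2}"
  then obtain e k u al where xe: "x = FF n m e k u al" by auto
  have xc: "FF n m e k u al \<in> carrier Au" using SS_c x xe by simp
  show ?thesis
  proof (cases e)
    case True
    then show ?thesis using y xe xc m_T1 m_T2 FF_in_SS by auto
  next
    case False
    then show ?thesis using y xe xc m_F1 m_F2 FF_in_SS by auto
  qed
qed

lemma SS_pow: "x \<in> SS \<Longrightarrow> y \<in> {e1, e2} \<Longrightarrow> x \<otimes>\<^bsub>Au\<^esub> y [^]\<^bsub>Au\<^esub> (j::nat) \<in> SS"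
proof (induction j)
  case 0
  then show ?case using monoid.r_one[OF mon SS_c[OF 0(1)]] by simp
next
  case (Suc j)
  have yc: "y \<in> carrier Au" using Suc.prems(2) gens by blast
  have pc: "y [^]\<^bsub>Au\<^esub> j \<in> carrier Au" using monoid.nat_pow_closed[OF mon yc] .
  have "x \<otimes>\<^bsub>Au\<^esub> y [^]\<^bsub>Au\<^esub> Suc j = (x \<otimes>\<^bsub>Au\<^esub> y [^]\<^bsub>Au\<^esub> j) \<otimes>\<^bsub>Au\<^esub> y"
    using monoid.m_assoc[OF mon SS_c[OF Suc.prems(1)] pc yc] by simp
  then show ?case using SS_mul[OF Suc.IH[OF Suc.prems] Suc.prems(2)] by simp
qed

lemma inv_e1: "inv\<^bsub>Au\<^esub> e1 = e1 [^]\<^bsub>Au\<^esub> (n - 1)"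
proof (rule group.inv_equality[OF grp])
  have "e1 [^]\<^bsub>Au\<^esub> (n - 1) \<otimes>\<^bsub>Au\<^esub> e1 = e1 [^]\<^bsub>Au\<^esub> Suc (n - 1)" by simp
  also have "Suc (n - 1) = group.ord Au e1" using ord_e1 npos by simp
  finally show "e1 [^]\<^bsub>Au\<^esub> (n - 1) \<otimes>\<^bsub>Au\<^esub> e1 = \<one>\<^bsub>Au\<^esub>"
    using group.pow_ord_eq_1[OF grp e1c] by simp
  show "e1 \<in> carrier Au" by (rule e1c)
  show "e1 [^]\<^bsub>Au\<^esub> (n - 1) \<in> carrier Au" using monoid.nat_pow_closed[OF mon e1c] .
qed

lemma inv_e2: "inv\<^bsub>Au\<^esub> e2 = e2 [^]\<^bsub>Au\<^esub> (2 * m - 1)"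
proof (rule group.inv_equality[OF grp])
  have "e2 [^]\<^bsub>Au\<^esub> (2 * m - 1) \<otimes>\<^bsub>Au\<^esub> e2 = e2 [^]\<^bsub>Au\<^esub> Suc (2 * m - 1)" by simp
  also have "Suc (2 * m - 1) = group.ord Au e2" using ord_e2 mpos by simp
  finally show "e2 [^]\<^bsub>Au\<^esub> (2 * m - 1) \<otimes>\<^bsub>Au\<^esub> e2 = \<one>\<^bsub>Au\<^esub>"
    using group.pow_ord_eq_1[OF grp e2c] by simp
  show "e2 \<in> carrier Au" by (rule e2c)
  show "e2 [^]\<^bsub>Au\<^esub> (2 * m - 1) \<in> carrier Au" using monoid.nat_pow_closed[OF mon e2c] .
qed

lemma H_SS_aux: "h \<in> H \<Longrightarrow> \<forall>x \<in> SS. x \<otimes>\<^bsub>Au\<^esub> h \<in> SS"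
proof (induction rule: generate.induct)
  case one
  show ?case
  proof (intro ballI)
    fix x assume x: "x \<in> SS"
    show "x \<otimes>\<^bsub>Au\<^esub> \<one>\<^bsub>Au\<^esub> \<in> SS" unfolding monoid.r_one[OF mon SS_c[OF x]] by (rule x)
  qed
next
  case (incl h)
  show ?case
  proof (intro ballI)
    fix x assume x: "x \<in> SS"
    show "x \<otimes>\<^bsub>Au\<^esub> h \<in> SS" by (rule SS_mul[OF x incl])
  qed
next
  case (inv h)
  then have hh: "h = e1 \<or> h = e2" by simp
  show ?case
  proof (intro ballI)
    fix x assume x: "x \<in> SS"
    from hh show "x \<otimes>\<^bsub>Au\<^esub> inv\<^bsub>Au\<^esub> h \<in> SS"
    proof (elim disjE)
      assume h1: "h = e1"
      have "x \<otimes>\<^bsub>Au\<^esub> e1 [^]\<^bsub>Au\<^esub> (n - 1) \<in> SS" by (rule SS_pow[OF x]) simp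
      then show ?thesis unfolding h1 inv_e1 .
    next
      assume h2: "h = e2"
      have "x \<otimes>\<^bsub>Au\<^esub> e2 [^]\<^bsub>Au\<^esub> (2 * m - 1) \<in> SS" by (rule SS_pow[OF x]) simp
      then show ?thesis unfolding h2 inv_e2 .
    qed
  qed
next
  case (eng h1 h2)
  have c1: "h1 \<in> carrier Au" "h2 \<in> carrier Au" using eng.hyps Hc by auto
  show ?case
  proof (intro ballI)
    fix x assume x: "x \<in> SS"
    have a: "x \<otimes>\<^bsub>Au\<^esub> (h1 \<otimes>\<^bsub>Au\<^esub> h2) = (x \<otimes>\<^bsub>Au\<^esub> h1) \<otimes>\<^bsub>Au\<^esub> h2"
      using monoid.m_assoc[OF mon SS_c[OF x] c1] by (rule sym)
    have b: "x \<otimes>\<^bsub>Au\<^esub> h1 \<in> SS" using eng.IH(1) x by blast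
    have "(x \<otimes>\<^bsub>Au\<^esub> h1) \<otimes>\<^bsub>Au\<^esub> h2 \<in> SS" using eng.IH(2) b by blast
    then show "x \<otimes>\<^bsub>Au\<^esub> (h1 \<otimes>\<^bsub>Au\<^esub> h2) \<in> SS" unfolding a .
  qed
qed

lemma H_eq: "H = SS"
proof
  show "SS \<subseteq> H" by (rule SS_H)
  show "H \<subseteq> SS"
  proof
    fix h assume h: "h \<in> H"
    have o: "\<one>\<^bsub>Au\<^esub> \<in> SS" using FF_in_SS one_FF by simp
    have "\<one>\<^bsub>Au\<^esub> \<otimes>\<^bsub>Au\<^esub> h \<in> SS" using H_SS_aux[OF h] o by blast
    then show "h \<in> SS" using monoid.l_one[OF mon Hc[OF h]] by simp
  qed
qed

lemma card_H: "card H = 2 * m ^ 2 * n"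
proof -
  have inj: "inj_on (\<lambda>(e, k, u, al). FF n m e k u al) PP"
  proof (rule inj_onI)
    fix p p' assume p: "p \<in> PP" and p': "p' \<in> PP"
      and eq: "(\<lambda>(e, k, u, al). FF n m e k u al) p = (\<lambda>(e, k, u, al). FF n m e k u al) p'"
    obtain e k u al where pe: "p = (e, k, u, al)" by (cases p) auto
    obtain e' k' u' al' where pe': "p' = (e', k', u', al')" by (cases p') auto
    from eq have "e = e' \<and> k mod int n = k' mod int n \<and> u mod int m = u' mod int m \<and> al mod int m = al' mod int m"
      unfolding pe pe' by (simp add: FF_eq_iff)
    moreover have "k mod int n = k" "k' mod int n = k'" "u mod int m = u" "u' mod int m = u'"
      "al mod int m = al" "al' mod int m = al'"
      using p p' unfolding pe pe' by auto
    ultimately show "p = p'" unfolding pe pe' by simp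
  qed
  have "card H = card PP" unfolding H_eq using card_image[OF inj] .
  also have "\<dots> = 2 * n * m * m" by (simp add: card_cartesian_product)
  finally show ?thesis by (simp add: power2_eq_square)
qed

end

theorem lemma5p6:
  fixes m s n :: nat
  assumes "m \<ge> 3" and "odd m"
    and "s > 0" and "even s" and "\<not> 4 dvd s"
    and "n = s * m"
  shows "eta1 n m \<in> carrier (AutC n m)
    \<and> eta2 n m \<in> carrier (AutC n m)
    \<and> group.ord (AutC n m) (eta1 n m) = n
    \<and> group.ord (AutC n m) (eta2 n m) = 2 * m
    \<and> group.ord (AutC n m) (eta2 n m \<otimes>\<^bsub>AutC n m\<^esub> eta1 n m) = 2
    \<and> card (generate (AutC n m) {eta1 n m, eta2 n m}) = 2 * m^2 * n"
proof -
  obtain q where q: "s = 2 * q" using assms(4) by blast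
  have q0: "q > 0" using assms(3) q by simp
  have nq: "n = 2 * m * q" using assms(6) q by simp
  interpret S: setup56 n m q
    by unfold_locales (use nq assms(1) q0 in auto)
  show ?thesis by (intro conjI S.e1c S.e2c S.ord_e1 S.ord_e2 S.ord_e21 S.card_H)
qed

end
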